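(* Let $\Gamma$ be a graph. If $\Gamma$ is edge-transitive (respectively, arc-transitive), then $\Gamma$ is lobe-transitive and every lobe of $\Gamma$, regarded as a graph in its own right, is edge-transitive (respectively, arc-transitive).
   Context: All graphs are simple, connected, and finite or countably infinite. For edges $e_1,e_2$ write $e_1\cong e_2$ if $e_1=e_2$ or they lie on a common cycle; a lobe is the subgraph induced by an equivalence class of this relation (a cut-edge with its ends, or a maximal biconnected subgraph). $\Gamma$ is lobe-transitive if $\mathrm{Aut}(\Gamma)$ acts transitively on the set of lobes. An arc is an ordered pair of adjacent vertices; arc-transitive means the automorphism group acts transitively on arcs. *)

theory Defs
  imports Main "HOL-Library.Countable_Set"
begin

definition simple_graph :: "'a set \<Rightarrow> ('a \<Rightarrow> 'a \<Rightarrow> bool) \<Rightarrow> bool" where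
  "simple_graph V E \<longleftrightarrow> (\<forall>x y. E x y \<longrightarrow> x \<in> V \<and> y \<in> V) \<and>
     (\<forall>x y. E x y \<longrightarrow> E y x) \<and> (\<forall>x. \<not> E x x)"

definition connected_graph :: "'a set \<Rightarrow> ('a \<Rightarrow> 'a \<Rightarrow> bool) \<Rightarrow> bool" where
  "connected_graph V E \<longleftrightarrow> (\<forall>x\<in>V. \<forall>y\<in>V. E\<^sup>*\<^sup>* x y)"

definition graph_aut :: "'a set \<Rightarrow> ('a \<Rightarrow> 'a \<Rightarrow> bool) \<Rightarrow> ('a \<Rightarrow> 'a) \<Rightarrow> bool" where
  "graph_aut V E f \<longleftrightarrow> bij_betw f V V \<and> (\<forall>x\<in>V. \<forall>y\<in>V. E x y \<longleftrightarrow> E (f x) (f y))"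

definition graph_edges :: "('a \<Rightarrow> 'a \<Rightarrow> bool) \<Rightarrow> 'a set set" where
  "graph_edges E = {{x, y} | x y. E x y}"

definition graph_arcs :: "('a \<Rightarrow> 'a \<Rightarrow> bool) \<Rightarrow> ('a \<times> 'a) set" where
  "graph_arcs E = {(x, y). E x y}"

definition edge_transitive :: "'a set \<Rightarrow> ('a \<Rightarrow> 'a \<Rightarrow> bool) \<Rightarrow> bool" where
  "edge_transitive V E \<longleftrightarrow> (\<forall>e1\<in>graph_edges E. \<forall>e2\<in>graph_edges E.
      \<exists>f. graph_aut V E f \<and> f ` e1 = e2)"

definition arc_transitive :: "'a set \<Rightarrow> ('a \<Rightarrow> 'a \<Rightarrow> bool) \<Rightarrow> bool" where
  "arc_transitive V E \<longleftrightarrow> (\<forall>a\<in>graph_arcs E. \<forall>b\<in>graph_arcs E.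
      \<exists>f. graph_aut V E f \<and> f (fst a) = fst b \<and> f (snd a) = snd b)"

definition is_cycle :: "('a \<Rightarrow> 'a \<Rightarrow> bool) \<Rightarrow> 'a list \<Rightarrow> bool" where
  "is_cycle E cs \<longleftrightarrow> length cs \<ge> 3 \<and> distinct cs \<and>
     (\<forall>i < length cs. E (cs ! i) (cs ! ((i + 1) mod length cs)))"

definition cycle_edges :: "'a list \<Rightarrow> 'a set set" where
  "cycle_edges cs = {{cs ! i, cs ! ((i + 1) mod length cs)} | i. i < length cs}"

definition lobe_rel :: "('a \<Rightarrow> 'a \<Rightarrow> bool) \<Rightarrow> 'a set \<Rightarrow> 'a set \<Rightarrow> bool" where
  "lobe_rel E e1 e2 \<longleftrightarrow> e1 \<in> graph_edges E \<and> e2 \<in> graph_edges E \<and>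
     (e1 = e2 \<or> (\<exists>cs. is_cycle E cs \<and> e1 \<in> cycle_edges cs \<and> e2 \<in> cycle_edges cs))"

text \<open>Lobes, represented by their edge sets (equivalence classes of lobe_rel).\<close>
definition lobes :: "('a \<Rightarrow> 'a \<Rightarrow> bool) \<Rightarrow> 'a set set set" where
  "lobes E = {{e'. lobe_rel E e e'} | e. e \<in> graph_edges E}"

text \<open>The lobe with edge set L as a graph in its own right: vertices are the ends of its edges.\<close>
definition lobe_verts :: "'a set set \<Rightarrow> 'a set" where
  "lobe_verts L = \<Union> L"

definition lobe_adj :: "'a set set \<Rightarrow> 'a \<Rightarrow> 'a \<Rightarrow> bool" where
  "lobe_adj L x y \<longleftrightarrow> x \<noteq> y \<and> {x, y} \<in> L"

definition lobe_transitive :: "'a set \<Rightarrow> ('a \<Rightarrow> 'a \<Rightarrow> bool) \<Rightarrow> bool" where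
  "lobe_transitive V E \<longleftrightarrow> (\<forall>L1\<in>lobes E. \<forall>L2\<in>lobes E.
      \<exists>f. graph_aut V E f \<and> (\<lambda>e. f ` e) ` L1 = L2)"

end

theory Submission
  imports Defs
begin

fun pedges :: "'a list \<Rightarrow> 'a set set" where
  "pedges (x # y # xs) = insert {x, y} (pedges (y # xs))"
| "pedges _ = {}"

lemma pedges_nth: "pedges xs = {{xs ! i, xs ! Suc i} | i. Suc i < length xs}"
proof (induction xs rule: pedges.induct)
  case (1 x y xs)
  show ?case
  proof (rule set_eqI, rule iffI)
    fix e assume "e \<in> pedges (x # y # xs)"
    then have "e = {x,y} \<or> e \<in> pedges (y # xs)" by simp
    then show "e \<in> {{(x # y # xs) ! i, (x # y # xs) ! Suc i} | i. Suc i < length (x # y # xs)}"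
    proof
      assume "e = {x,y}" then show ?thesis by (intro CollectI exI[of _ 0]) auto
    next
      assume "e \<in> pedges (y # xs)"
      then obtain i where "e = {(y#xs) ! i, (y#xs) ! Suc i}" "Suc i < length (y#xs)" using 1 by auto
      then show ?thesis by (intro CollectI exI[of _ "Suc i"]) auto
    qed
  next
    fix e assume "e \<in> {{(x # y # xs) ! i, (x # y # xs) ! Suc i} | i. Suc i < length (x # y # xs)}"
    then obtain i where i: "e = {(x # y # xs) ! i, (x # y # xs) ! Suc i}" "Suc i < length (x # y # xs)" by auto
    show "e \<in> pedges (x # y # xs)"
    proof (cases i)
      case 0 then show ?thesis using i by simp
    next
      case (Suc j) then show ?thesis using i 1 by auto
    qed
  qed
qed auto

lemma pedges_append: "pedges (xs @ ys) = pedges xs \<union> pedges ys \<union> (if xs = [] \<or> ys = [] then {} else {{last xs, hd ys}})"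
  by (induction xs rule: pedges.induct) (auto simp: neq_Nil_conv)

lemma pedges_rev: "pedges (rev xs) = pedges xs"
  by (induction xs rule: pedges.induct) (auto simp: pedges_append insert_commute)

lemma pedges_subset: "e \<in> pedges xs \<Longrightarrow> e \<subseteq> set xs"
  by (induction xs rule: pedges.induct) auto

lemma pedges_split: "e \<in> pedges xs \<Longrightarrow> \<exists>ys x y zs. xs = ys @ x # y # zs \<and> e = {x, y}"
proof (induction xs rule: pedges.induct)
  case (1 x y xs)
  then show ?case
  proof (cases "e = {x,y}")
    case True then show ?thesis by (intro exI[of _ "[]"]) auto
  next
    case False
    then obtain ys a b zs where "y # xs = ys @ a # b # zs" "e = {a,b}" using 1 by auto
    then show ?thesis by (intro exI[of _ "x # ys"]) auto
  qed
qed auto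

lemma is_cycle_iff: "is_cycle E cs \<longleftrightarrow> 3 \<le> length cs \<and> distinct cs \<and> successively E cs \<and> E (last cs) (hd cs)"
proof -
  have "(\<forall>i < length cs. E (cs ! i) (cs ! ((i + 1) mod length cs))) \<longleftrightarrow>
        successively E cs \<and> E (last cs) (hd cs)" if "3 \<le> length cs"
  proof -
    have ne: "cs \<noteq> []" using that by auto
    have l: "last cs = cs ! (length cs - 1)" "hd cs = cs ! 0" using ne by (auto simp: last_conv_nth hd_conv_nth)
    show ?thesis
    proof
      assume H: "\<forall>i < length cs. E (cs ! i) (cs ! ((i + 1) mod length cs))"
      have "successively E cs" unfolding successively_conv_nth
      proof (intro allI impI)
        fix i assume "Suc i < length cs"
        then show "E (cs ! i) (cs ! Suc i)" using H[rule_format, of i] by auto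
      qed
      moreover have "E (last cs) (hd cs)"
      proof -
        have "Suc (length cs - 1) = length cs" using that by simp
        then show ?thesis using H[rule_format, of "length cs - 1"] that l by simp
      qed
      ultimately show "successively E cs \<and> E (last cs) (hd cs)" by blast
    next
      assume H: "successively E cs \<and> E (last cs) (hd cs)"
      show "\<forall>i < length cs. E (cs ! i) (cs ! ((i + 1) mod length cs))"
      proof (intro allI impI)
        fix i assume i: "i < length cs"
        show "E (cs ! i) (cs ! ((i + 1) mod length cs))"
        proof (cases "Suc i < length cs")
          case True then show ?thesis using H successively_nth[of E cs i] by auto
        next
          case False
          then have "Suc i = length cs" using i by auto
          then have "i = length cs - 1" "(i + 1) mod length cs = 0" by auto
          then show ?thesis using H l by simp
        qed
      qed
    qed
  qed
  then show ?thesis unfolding is_cycle_def by blast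
qed

lemma cycle_edges_eq: "cs \<noteq> [] \<Longrightarrow> cycle_edges cs = insert {last cs, hd cs} (pedges cs)"
proof -
  assume ne: "cs \<noteq> []"
  have l: "last cs = cs ! (length cs - 1)" "hd cs = cs ! 0" using ne by (auto simp: last_conv_nth hd_conv_nth)
  show ?thesis
  proof (rule set_eqI, rule iffI)
    fix e assume "e \<in> cycle_edges cs"
    then obtain i where i: "e = {cs ! i, cs ! ((i + 1) mod length cs)}" "i < length cs"
      unfolding cycle_edges_def by auto
    show "e \<in> insert {last cs, hd cs} (pedges cs)"
    proof (cases "Suc i < length cs")
      case True then show ?thesis using i unfolding pedges_nth by auto
    next
      case False
      then have "Suc i = length cs" using i by auto
      then have "i = length cs - 1" "(i + 1) mod length cs = 0" by auto
      then show ?thesis using i l by simp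
    qed
  next
    fix e assume "e \<in> insert {last cs, hd cs} (pedges cs)"
    then show "e \<in> cycle_edges cs"
    proof
      assume "e = {last cs, hd cs}"
      then show ?thesis unfolding cycle_edges_def l using ne
        by (intro CollectI exI[of _ "length cs - 1"]) (cases "length cs = 1"; auto)
    next
      assume "e \<in> pedges cs"
      then obtain i where "e = {cs ! i, cs ! Suc i}" "Suc i < length cs" unfolding pedges_nth by auto
      then show ?thesis unfolding cycle_edges_def by (intro CollectI exI[of _ i]) auto
    qed
  qed
qed

lemma cycle_rot1:
  assumes "is_cycle E cs"
  shows "is_cycle E (rotate1 cs) \<and> cycle_edges (rotate1 cs) = cycle_edges cs"
proof -
  obtain x xs where cs: "cs = x # xs" and ne: "xs \<noteq> []"
  proof -
    have "2 \<le> length (tl cs)" using assms unfolding is_cycle_iff by auto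
    then have "tl cs \<noteq> []" "cs \<noteq> []" by (metis le_zero_eq list.size(3) zero_neq_numeral, metis le_zero_eq list.size(3) zero_neq_numeral tl_Nil)
    then show ?thesis using that[of "hd cs" "tl cs"] by simp
  qed
  have H: "3 \<le> length cs" "distinct cs" "successively E cs" "E (last cs) (hd cs)"
    using assms unfolding is_cycle_iff by auto
  have s: "successively E xs" "E x (hd xs)" using H(3) ne unfolding cs successively_Cons by auto
  have "is_cycle E (xs @ [x])" unfolding is_cycle_iff
    using H s ne cs by (auto simp: successively_append_iff)
  moreover have "pedges (x # xs) = insert {x, hd xs} (pedges xs)" using ne by (cases xs) auto
  then have "cycle_edges (xs @ [x]) = cycle_edges cs"
    using ne cs by (auto simp: cycle_edges_eq pedges_append)
  ultimately show ?thesis using cs by simp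
qed

lemma cycle_rot:
  assumes "is_cycle E cs"
  shows "is_cycle E (rotate n cs) \<and> cycle_edges (rotate n cs) = cycle_edges cs"
  by (induction n) (use assms cycle_rot1 in auto)

lemma cycle_rev:
  assumes "is_cycle E cs" and sym: "\<forall>x y. E x y \<longrightarrow> E y x"
  shows "is_cycle E (rev cs) \<and> cycle_edges (rev cs) = cycle_edges cs"
proof -
  have ne: "cs \<noteq> []" using assms unfolding is_cycle_iff by auto
  have "successively E (rev cs)" using assms unfolding is_cycle_iff successively_rev
    by (metis (no_types, lifting) successively_mono sym)
  then show ?thesis using assms ne
    by (auto simp: is_cycle_iff cycle_edges_eq pedges_rev hd_rev last_rev insert_commute)
qed

lemma cycle_split_edges:
  "cycle_edges (a # ms @ b # ns) = pedges (a # ms @ [b]) \<union> pedges (b # ns @ [a])"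
proof -
  have "pedges (a # ms @ b # ns) = pedges ((a # ms) @ (b # ns))" by simp
  also have "\<dots> = pedges (a # ms) \<union> pedges (b # ns) \<union> {{last (a # ms), b}}"
    by (simp only: pedges_append) simp
  finally have 1: "pedges (a # ms @ b # ns) = pedges (a # ms) \<union> pedges (b # ns) \<union> {{last (a # ms), b}}" .
  have 2: "pedges (a # ms @ [b]) = pedges (a # ms) \<union> {{last (a # ms), b}}"
    using pedges_append[of "a # ms" "[b]"] by simp
  have 3: "pedges (b # ns @ [a]) = pedges (b # ns) \<union> {{last (b # ns), a}}"
    using pedges_append[of "b # ns" "[a]"] by simp
  have 4: "last (a # ms @ b # ns) = last (b # ns)" by (simp add: last_append)
  show ?thesis using 1 2 3 4 by (auto simp add: cycle_edges_eq)
qed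

lemma cycle_edges_subset: "e \<in> cycle_edges cs \<Longrightarrow> e \<subseteq> set cs"
  by (cases "cs = []") (auto simp: cycle_edges_eq cycle_edges_def dest: pedges_subset)

lemma glue:
  assumes cyc: "is_cycle E (a # ms @ b # ns)"
    and s1: "successively E (b # zs)" and s2: "successively E (xs @ [a])"
    and cl: "E (last (b # zs)) (hd (xs @ [a]))"
    and d: "distinct (zs @ xs)" and disj: "set (zs @ xs) \<inter> set (a # ms @ b # ns) = {}"
    and e1: "e1 \<in> pedges (a # ms @ [b])"
    and nin: "{last (b # zs), hd (xs @ [a])} \<notin> cycle_edges (a # ms @ b # ns)"
  shows "\<exists>cs. is_cycle E cs \<and> e1 \<in> cycle_edges cs \<and> {last (b # zs), hd (xs @ [a])} \<in> cycle_edges cs"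
proof -
  let ?cs = "a # ms @ b # zs @ xs"
  have C: "3 \<le> length (a # ms @ b # ns)" "distinct (a # ms @ b # ns)"
    "successively E (a # ms @ b # ns)" using cyc unfolding is_cycle_iff by auto
  have len: "3 \<le> length ?cs"
  proof (rule ccontr)
    assume "\<not> ?thesis"
    then have "ms = []" "zs = []" "xs = []" by (cases ms; cases zs; cases xs; simp)+
    moreover have "{a, b} \<in> cycle_edges (a # [] @ b # ns)"
      unfolding cycle_split_edges by simp
    ultimately have "{last (b # zs), hd (xs @ [a])} \<in> cycle_edges (a # ms @ b # ns)"
      by (simp add: insert_commute)
    then show False using nin by blast
  qed
  have dist: "distinct ?cs" using C(2) d disj by auto
  have sa: "successively E (a # ms @ [b])"
    using C(3) successively_append_iff[of E "a # ms @ [b]" ns] by simp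
  have sx: "successively E xs" using s2 successively_append_iff[of E xs "[a]"] by simp
  have sbzx: "successively E ((b # zs) @ xs)"
    using s1 sx cl unfolding successively_append_iff by (cases xs) auto
  have succ: "successively E ?cs"
    using sa sbzx successively_append_iff[of E "a # ms @ [b]" "zs @ xs"]
      successively_append_iff[of E "[b]" "zs @ xs"]
    by (auto simp: successively_append_iff)
  have lastcs: "E (last ?cs) (hd ?cs)"
  proof (cases "xs = []")
    case True then show ?thesis using cl by (simp add: last_append)
  next
    case False
    then have "E (last xs) a" using s2 successively_append_iff[of E xs "[a]"] by simp
    then show ?thesis using False by (simp add: last_append)
  qed
  have cyc2: "is_cycle E ?cs" unfolding is_cycle_iff using len dist succ lastcs by blast
  have edges: "cycle_edges ?cs = insert {last ?cs, a} (pedges ((a # ms @ [b]) @ (zs @ xs)))"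
    by (simp add: cycle_edges_eq)
  have "e1 \<in> cycle_edges ?cs" using e1 unfolding edges pedges_append by auto
  moreover have "{last (b # zs), hd (xs @ [a])} \<in> cycle_edges ?cs"
  proof (cases "xs = []")
    case True then show ?thesis unfolding edges by (simp add: last_append)
  next
    case False
    have "{last (b # zs), hd xs} \<in> pedges ((b # zs) @ xs)" using False unfolding pedges_append by simp
    then have "{last (b # zs), hd xs} \<in> pedges ((a # ms) @ ((b # zs) @ xs))" unfolding pedges_append[of "a # ms"] by simp
    then show ?thesis using False unfolding edges by simp
  qed
  ultimately show ?thesis using cyc2 by blast
qed

lemma rotate_to_edge:
  assumes "is_cycle E cs" "e \<in> cycle_edges cs"
  shows "\<exists>P. is_cycle E P \<and> cycle_edges P = cycle_edges cs \<and> e = {last P, hd P}"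
proof -
  have ne: "cs \<noteq> []" using assms unfolding is_cycle_iff by auto
  have "e = {last cs, hd cs} \<or> e \<in> pedges cs" using assms(2) ne by (simp add: cycle_edges_eq)
  then show ?thesis
  proof
    assume "e = {last cs, hd cs}" then show ?thesis using assms by blast
  next
    assume "e \<in> pedges cs"
    then obtain ys x y zs where cs: "cs = ys @ x # y # zs" and e: "e = {x, y}" using pedges_split by blast
    have "rotate (length (ys @ [x])) ((ys @ [x]) @ (y # zs)) = (y # zs) @ (ys @ [x])"
      by (rule rotate_append)
    then have r: "rotate (length (ys @ [x])) cs = y # zs @ ys @ [x]" using cs by simp
    show ?thesis using cycle_rot[OF assms(1), of "length (ys @ [x])"] r e
      by (intro exI[of _ "y # zs @ ys @ [x]"]) (auto simp: insert_commute)
  qed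
qed

lemma rotate_to_vertex:
  assumes "a \<in> set cs"
  shows "\<exists>n t. rotate n cs = a # t"
proof -
  obtain p q where "cs = p @ a # q" using assms split_list by metis
  then have "rotate (length p) cs = (a # q) @ p" using rotate_append by metis
  then show ?thesis by auto
qed

lemma lobe_trans_core:
  assumes sym: "\<forall>x y. E x y \<longrightarrow> E y x"
    and C1: "is_cycle E C1" "e1 \<in> cycle_edges C1" "e2 \<in> cycle_edges C1"
    and C2: "is_cycle E C2" "e2 \<in> cycle_edges C2" "e3 \<in> cycle_edges C2"
  shows "e1 = e3 \<or> (\<exists>cs. is_cycle E cs \<and> e1 \<in> cycle_edges cs \<and> e3 \<in> cycle_edges cs)"
proof (cases "e3 \<in> cycle_edges C1")
  case True then show ?thesis using C1 by blast
next
  case nin: False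
  then have ne23: "e2 \<noteq> e3" using C1 by blast
  obtain P where P: "is_cycle E P" "cycle_edges P = cycle_edges C2" and e3: "e3 = {last P, hd P}"
    using rotate_to_edge[OF C2(1,3)] by blast
  have Pne: "P \<noteq> []" using P unfolding is_cycle_iff by auto
  have PH: "distinct P" "successively E P" "E (last P) (hd P)" using P unfolding is_cycle_iff by auto
  have "e2 \<in> pedges P" using C2(2) P(2) e3 ne23 Pne by (auto simp: cycle_edges_eq)
  then obtain p1 x y p2 where Pxy: "P = p1 @ x # y # p2" and e2: "e2 = {x, y}" using pedges_split by blast
  have xy: "x \<noteq> y" using PH(1) Pxy by auto
  have xyC1: "x \<in> set C1" "y \<in> set C1" using cycle_edges_subset[OF C1(3)] e2 by auto
  have xyP: "x \<in> set P" "y \<in> set P" using Pxy by auto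
  obtain xs a rest where Psplit: "P = xs @ a # rest" and a: "a \<in> set C1" and xsC: "\<forall>z\<in>set xs. z \<notin> set C1"
    using split_list_first_prop[of P "\<lambda>z. z \<in> set C1"] xyC1 xyP by blast
  have "\<exists>z\<in>set rest. z \<in> set C1"
  proof -
    have "x \<in> set (a # rest)" "y \<in> set (a # rest)" using xyP xyC1 xsC Psplit by auto
    then show ?thesis using xy xyC1 by auto
  qed
  then obtain ys b zs where rsplit: "rest = ys @ b # zs" and b: "b \<in> set C1" and zsC: "\<forall>z\<in>set zs. z \<notin> set C1"
    using split_list_last_prop[of rest "\<lambda>z. z \<in> set C1"] by blast
  have Pfull: "P = xs @ a # ys @ b # zs" using Psplit rsplit by simp
  have ab: "a \<noteq> b" using PH(1) Pfull by auto
  have s1: "successively E (b # zs)"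
    using PH(2) unfolding Pfull using successively_append_iff[of E "xs @ a # ys" "b # zs"] by simp
  have s2: "successively E (xs @ [a])"
    using PH(2) unfolding Pfull using successively_append_iff[of E "xs @ [a]" "ys @ b # zs"] by simp
  have lastP: "last P = last (b # zs)" unfolding Pfull by (simp add: last_append)
  have hdP: "hd P = hd (xs @ [a])" unfolding Pfull by (cases xs) auto
  have cl: "E (last (b # zs)) (hd (xs @ [a]))" using PH(3) lastP hdP by simp
  have d: "distinct (zs @ xs)" using PH(1) unfolding Pfull by auto
  have e3': "e3 = {last (b # zs), hd (xs @ [a])}" using e3 lastP hdP by simp
  obtain n t where rt: "rotate n C1 = a # t" using rotate_to_vertex[OF a] by blast
  have C1r: "is_cycle E (a # t)" "cycle_edges (a # t) = cycle_edges C1"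
    using cycle_rot[OF C1(1), of n] rt by auto
  have "b \<in> set t" using b ab rt by (metis set_ConsD set_rotate)
  then obtain ms ns where t: "t = ms @ b # ns" using split_list by metis
  have setC1: "set (a # ms @ b # ns) = set C1" using rt t by (metis set_rotate)
  have disj: "set (zs @ xs) \<inter> set (a # ms @ b # ns) = {}" using setC1 xsC zsC by auto
  have e1in: "e1 \<in> pedges (a # ms @ [b]) \<union> pedges (b # ns @ [a])"
    using C1r(2) C1(2) t cycle_split_edges by metis
  show ?thesis
  proof (cases "e1 \<in> pedges (a # ms @ [b])")
    case True
    have "\<exists>cs. is_cycle E cs \<and> e1 \<in> cycle_edges cs \<and> {last (b # zs), hd (xs @ [a])} \<in> cycle_edges cs"
      apply (rule glue[where ns = ns])
      using C1r t s1 s2 cl d disj True nin e3' by auto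
    then show ?thesis using e3' by auto
  next
    case False
    then have e1': "e1 \<in> pedges (a # rev ns @ [b])" using e1in pedges_rev[of "b # ns @ [a]"] by simp
    have rv: "is_cycle E (rev (a # t))" "cycle_edges (rev (a # t)) = cycle_edges (a # t)"
      using cycle_rev[OF C1r(1) sym] by auto
    have "rev (a # t) = (rev ns @ b # rev ms) @ [a]" using t by simp
    then have "rotate (length (rev ns @ b # rev ms)) (rev (a # t)) = [a] @ (rev ns @ b # rev ms)"
      using rotate_append by metis
    then have C1'': "is_cycle E (a # rev ns @ b # rev ms)" "cycle_edges (a # rev ns @ b # rev ms) = cycle_edges C1"
      using cycle_rot[OF rv(1), of "length (rev ns @ b # rev ms)"] rv(2) C1r(2) by auto
    have setC1': "set (a # rev ns @ b # rev ms) = set C1" using setC1 by auto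
    have "\<exists>cs. is_cycle E cs \<and> e1 \<in> cycle_edges cs \<and> {last (b # zs), hd (xs @ [a])} \<in> cycle_edges cs"
      apply (rule glue[where ns = "rev ms" and ms = "rev ns"])
      using C1'' setC1' s1 s2 cl d disj e1' nin e3' by auto
    then show ?thesis using e3' by auto
  qed
qed

lemma lobe_rel_sym: "lobe_rel E e1 e2 \<Longrightarrow> lobe_rel E e2 e1"
  unfolding lobe_rel_def by blast

lemma lobe_rel_trans:
  assumes "simple_graph V E" "lobe_rel E e1 e2" "lobe_rel E e2 e3"
  shows "lobe_rel E e1 e3"
proof -
  have sym: "\<forall>x y. E x y \<longrightarrow> E y x" using assms(1) unfolding simple_graph_def by blast
  show ?thesis
  proof (cases "e1 = e2 \<or> e2 = e3")
    case True then show ?thesis using assms(2,3) by auto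
  next
    case False
    then obtain C1 C2 where "is_cycle E C1" "e1 \<in> cycle_edges C1" "e2 \<in> cycle_edges C1"
      "is_cycle E C2" "e2 \<in> cycle_edges C2" "e3 \<in> cycle_edges C2"
      using assms(2,3) unfolding lobe_rel_def by blast
    then have "e1 = e3 \<or> (\<exists>cs. is_cycle E cs \<and> e1 \<in> cycle_edges cs \<and> e3 \<in> cycle_edges cs)"
      using lobe_trans_core[OF sym] by blast
    then show ?thesis using assms(2,3) unfolding lobe_rel_def by blast
  qed
qed

lemma class_eq:
  assumes "simple_graph V E" "lobe_rel E e e'"
  shows "{x. lobe_rel E e x} = {x. lobe_rel E e' x}"
  using assms lobe_rel_trans[OF assms(1)] lobe_rel_sym by blast

lemma edge_sub: "simple_graph V E \<Longrightarrow> e \<in> graph_edges E \<Longrightarrow> e \<subseteq> V"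
  unfolding simple_graph_def graph_edges_def by auto

lemma cycle_sub:
  assumes "simple_graph V E" "is_cycle E cs"
  shows "set cs \<subseteq> V"
proof
  fix x assume "x \<in> set cs"
  then obtain i where "i < length cs" "x = cs ! i" by (metis in_set_conv_nth)
  then have "E x (cs ! ((i + 1) mod length cs))" using assms(2) unfolding is_cycle_def by auto
  then show "x \<in> V" using assms(1) unfolding simple_graph_def by blast
qed

lemma aut_cycle:
  assumes g: "simple_graph V E" and f: "graph_aut V E f" and c: "is_cycle E cs"
  shows "is_cycle E (map f cs) \<and> cycle_edges (map f cs) = (\<lambda>e. f ` e) ` cycle_edges cs"
proof -
  have sub: "set cs \<subseteq> V" using cycle_sub[OF g c] .
  have inj: "inj_on f V" using f unfolding graph_aut_def bij_betw_def by blast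
  have inV: "\<And>i. i < length cs \<Longrightarrow> cs ! i \<in> V" using sub by auto
  have "is_cycle E (map f cs)"
    unfolding is_cycle_def
  proof (intro conjI allI impI)
    show "3 \<le> length (map f cs)" using c unfolding is_cycle_def by simp
    show "distinct (map f cs)" using c inj sub unfolding is_cycle_def
      by (simp add: distinct_map inj_on_subset)
    fix i assume i: "i < length (map f cs)"
    have "0 < length cs" using i by (simp del: length_greater_0_conv)
    then have "(i + 1) mod length cs < length cs" by (rule mod_less_divisor)
    then show "E (map f cs ! i) (map f cs ! ((i + 1) mod length (map f cs)))"
      using c i f inV unfolding is_cycle_def graph_aut_def by auto
  qed
  moreover have "cycle_edges (map f cs) = (\<lambda>e. f ` e) ` cycle_edges cs"
  proof -
    have "cycle_edges (map f cs) = {{f (cs ! i), f (cs ! ((i + 1) mod length cs))} | i. i < length cs}"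
    proof -
      have mlt: "\<And>i. i < length cs \<Longrightarrow> (i + 1) mod length cs < length cs" by (metis gr_zeroI less_zeroE mod_less_divisor)
      show ?thesis unfolding cycle_edges_def length_map using mlt by (metis (no_types, lifting) nth_map)
    qed
    also have "\<dots> = (\<lambda>e. f ` e) ` cycle_edges cs" unfolding cycle_edges_def by (auto; rule image_eqI; auto)
    finally show ?thesis .
  qed
  ultimately show ?thesis by blast
qed

lemma aut_edge:
  assumes "graph_aut V E f" "simple_graph V E" "e \<in> graph_edges E"
  shows "f ` e \<in> graph_edges E"
proof -
  obtain x y where "e = {x, y}" "E x y" using assms(3) unfolding graph_edges_def by auto
  moreover then have "x \<in> V" "y \<in> V" using assms(2) unfolding simple_graph_def by auto
  ultimately show ?thesis using assms(1) unfolding graph_aut_def graph_edges_def by auto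
qed

lemma aut_lobe_rel:
  assumes g: "simple_graph V E" and f: "graph_aut V E f" and r: "lobe_rel E e e'"
  shows "lobe_rel E (f ` e) (f ` e')"
proof -
  have "f ` e \<in> graph_edges E" "f ` e' \<in> graph_edges E" using r aut_edge[OF f g] unfolding lobe_rel_def by auto
  moreover have "f ` e = f ` e' \<or> (\<exists>cs. is_cycle E cs \<and> f ` e \<in> cycle_edges cs \<and> f ` e' \<in> cycle_edges cs)"
  proof (cases "e = e'")
    case False
    then obtain cs where "is_cycle E cs" "e \<in> cycle_edges cs" "e' \<in> cycle_edges cs" using r unfolding lobe_rel_def by blast
    then show ?thesis using aut_cycle[OF g f] by (intro disjI2 exI[of _ "map f cs"]) auto
  qed simp
  ultimately show ?thesis unfolding lobe_rel_def by blast
qed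

lemma aut_inv:
  assumes f: "graph_aut V E f"
  shows "graph_aut V E (inv_into V f)"
proof -
  have b: "bij_betw f V V" using f unfolding graph_aut_def by blast
  have bi: "bij_betw (inv_into V f) V V" using bij_betw_inv_into[OF b] .
  have "\<forall>x\<in>V. \<forall>y\<in>V. E x y \<longleftrightarrow> E (inv_into V f x) (inv_into V f y)"
  proof (intro ballI)
    fix x y assume "x \<in> V" "y \<in> V"
    moreover have "\<And>z. z \<in> V \<Longrightarrow> f (inv_into V f z) = z" "\<And>z. z \<in> V \<Longrightarrow> inv_into V f z \<in> V"
      using b bi by (auto simp: bij_betw_def f_inv_into_f)
    ultimately show "E x y \<longleftrightarrow> E (inv_into V f x) (inv_into V f y)"
      using f unfolding graph_aut_def by metis
  qed
  then show ?thesis using bi unfolding graph_aut_def by blast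
qed

lemma class_image:
  assumes g: "simple_graph V E" and f: "graph_aut V E f" and e: "e \<in> graph_edges E"
  shows "(\<lambda>e. f ` e) ` {x. lobe_rel E e x} = {x. lobe_rel E (f ` e) x}"
proof
  show "(\<lambda>e. f ` e) ` {x. lobe_rel E e x} \<subseteq> {x. lobe_rel E (f ` e) x}"
    using aut_lobe_rel[OF g f] by auto
next
  show "{x. lobe_rel E (f ` e) x} \<subseteq> (\<lambda>e. f ` e) ` {x. lobe_rel E e x}"
  proof
    fix x assume x: "x \<in> {x. lobe_rel E (f ` e) x}"
    let ?g = "inv_into V f"
    have b: "bij_betw f V V" using f unfolding graph_aut_def by blast
    have gi: "\<And>A. A \<subseteq> V \<Longrightarrow> ?g ` (f ` A) = A"
      using b by (simp add: bij_betw_def inv_into_image_cancel)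
    have fg: "\<And>A. A \<subseteq> V \<Longrightarrow> f ` (?g ` A) = A"
      using b by (simp add: bij_betw_def image_inv_into_cancel)
    have r: "lobe_rel E (f ` e) x" using x by simp
    then have ev: "e \<subseteq> V" "x \<subseteq> V"
    proof -
      have "f ` e \<in> graph_edges E" "x \<in> graph_edges E" using r unfolding lobe_rel_def by auto
      then have "f ` e \<subseteq> V" "x \<subseteq> V" using edge_sub[OF g] by auto
      moreover have "e \<subseteq> V" using edge_sub[OF g e] .
      ultimately show "e \<subseteq> V" "x \<subseteq> V" by auto
    qed
    have "lobe_rel E (?g ` (f ` e)) (?g ` x)" using aut_lobe_rel[OF g aut_inv[OF f] r] .
    then have "lobe_rel E e (?g ` x)" using gi[OF ev(1)] by simp
    moreover have "x = f ` (?g ` x)" using fg[OF ev(2)] by simp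
    ultimately show "x \<in> (\<lambda>e. f ` e) ` {x. lobe_rel E e x}" by blast
  qed
qed

lemma lobe_sub: "L \<in> lobes E \<Longrightarrow> L \<subseteq> graph_edges E"
  unfolding lobes_def lobe_rel_def by auto

lemma lobe_class: assumes "simple_graph V E" "L \<in> lobes E" "e \<in> L"
  shows "L = {x. lobe_rel E e x}" "e \<in> graph_edges E"
proof -
  obtain e0 where L: "L = {x. lobe_rel E e0 x}" "e0 \<in> graph_edges E" using assms(2) unfolding lobes_def by auto
  then show "L = {x. lobe_rel E e x}" using class_eq[OF assms(1)] assms(3) by auto
  show "e \<in> graph_edges E" using lobe_sub assms(2,3) by auto
qed

lemma edge_E: assumes "simple_graph V E" "{x, y} \<in> graph_edges E" shows "E x y"
proof -
  obtain p q where "{x, y} = {p, q}" "E p q" using assms(2) unfolding graph_edges_def by auto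
  then show ?thesis using assms(1) unfolding simple_graph_def by (metis doubleton_eq_iff)
qed

lemma lobe_edges: assumes "simple_graph V E" "L \<in> lobes E"
  shows "graph_edges (lobe_adj L) = L"
proof
  show "graph_edges (lobe_adj L) \<subseteq> L" unfolding graph_edges_def lobe_adj_def by auto
  show "L \<subseteq> graph_edges (lobe_adj L)"
  proof
    fix e assume "e \<in> L"
    then have "e \<in> graph_edges E" using lobe_sub assms(2) by auto
    then obtain x y where "e = {x, y}" "E x y" unfolding graph_edges_def by auto
    moreover then have "x \<noteq> y" using assms(1) unfolding simple_graph_def by auto
    ultimately show "e \<in> graph_edges (lobe_adj L)" using \<open>e \<in> L\<close> unfolding graph_edges_def lobe_adj_def by auto
  qed
qed

lemma lobe_aut:
  assumes g: "simple_graph V E" and L: "L \<in> lobes E" and e1: "e1 \<in> L" and e2: "e2 \<in> L"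
    and f: "graph_aut V E f" and fe: "f ` e1 = e2"
  shows "graph_aut (lobe_verts L) (lobe_adj L) f"
proof -
  have L1: "L = {x. lobe_rel E e1 x}" "e1 \<in> graph_edges E" using lobe_class[OF g L e1] by auto
  have L2: "L = {x. lobe_rel E e2 x}" using lobe_class[OF g L e2] by auto
  have img: "(\<lambda>e. f ` e) ` L = L" using class_image[OF g f L1(2)] L1(1) L2 fe by simp
  have LV: "lobe_verts L \<subseteq> V" unfolding lobe_verts_def using lobe_sub[OF L] edge_sub[OF g] by blast
  have inj: "inj_on f V" using f unfolding graph_aut_def bij_betw_def by blast
  have injL: "inj_on f (lobe_verts L)" using inj LV inj_on_subset by blast
  have "f ` lobe_verts L = lobe_verts L" unfolding lobe_verts_def
    using img by (metis image_Union)
  then have bij: "bij_betw f (lobe_verts L) (lobe_verts L)" using injL unfolding bij_betw_def by blast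
  have "\<forall>x\<in>lobe_verts L. \<forall>y\<in>lobe_verts L. lobe_adj L x y \<longleftrightarrow> lobe_adj L (f x) (f y)"
  proof (intro ballI iffI)
    fix x y assume xy: "x \<in> lobe_verts L" "y \<in> lobe_verts L"
    then have xyV: "x \<in> V" "y \<in> V" using LV by auto
    {
      assume "lobe_adj L x y"
      then have "x \<noteq> y" "{x, y} \<in> L" unfolding lobe_adj_def by auto
      then have "f x \<noteq> f y" "{f x, f y} \<in> L" using inj xyV img inj_on_eq_iff[OF inj] by (auto, metis image_empty image_eqI image_insert)
      then show "lobe_adj L (f x) (f y)" unfolding lobe_adj_def by auto
    next
      assume "lobe_adj L (f x) (f y)"
      then have "f x \<noteq> f y" "{f x, f y} \<in> L" unfolding lobe_adj_def by auto
      then obtain e where e: "e \<in> L" "f ` e = f ` {x, y}" using img by (metis (no_types, lifting) image_empty image_iff image_insert)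
      have "e \<subseteq> V" using e(1) lobe_sub[OF L] edge_sub[OF g] by auto
      then have "e = {x, y}" using e(2) inj_on_image_Pow[OF inj] xyV unfolding inj_on_def by auto
      then show "lobe_adj L x y" using e(1) \<open>f x \<noteq> f y\<close> unfolding lobe_adj_def by auto
    }
  qed
  then show ?thesis using bij unfolding graph_aut_def by blast
qed

lemma et_lobe_transitive:
  assumes g: "simple_graph V E" and et: "edge_transitive V E"
  shows "lobe_transitive V E"
  unfolding lobe_transitive_def
proof (intro ballI)
  fix L1 L2 assume "L1 \<in> lobes E" "L2 \<in> lobes E"
  then obtain e1 e2 where "L1 = {x. lobe_rel E e1 x}" "e1 \<in> graph_edges E" "L2 = {x. lobe_rel E e2 x}" "e2 \<in> graph_edges E"
    unfolding lobes_def by auto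
  moreover obtain f where "graph_aut V E f" "f ` e1 = e2" using et calculation unfolding edge_transitive_def by blast
  ultimately show "\<exists>f. graph_aut V E f \<and> (\<lambda>e. f ` e) ` L1 = L2" using class_image[OF g] by metis
qed

lemma at_et: assumes g: "simple_graph V E" and at: "arc_transitive V E" shows "edge_transitive V E"
  unfolding edge_transitive_def
proof (intro ballI)
  fix e1 e2 assume "e1 \<in> graph_edges E" "e2 \<in> graph_edges E"
  then obtain x1 y1 x2 y2 where "e1 = {x1, y1}" "E x1 y1" "e2 = {x2, y2}" "E x2 y2" unfolding graph_edges_def by auto
  moreover then obtain f where "graph_aut V E f" "f x1 = x2" "f y1 = y2"
    using at unfolding arc_transitive_def graph_arcs_def by fastforce
  ultimately show "\<exists>f. graph_aut V E f \<and> f ` e1 = e2" by auto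
qed

theorem lemma4p1:
  fixes V :: "'a set" and E :: "'a \<Rightarrow> 'a \<Rightarrow> bool"
  assumes "simple_graph V E" and "connected_graph V E" and "countable V"
  shows "(edge_transitive V E \<longrightarrow> lobe_transitive V E \<and>
            (\<forall>L\<in>lobes E. edge_transitive (lobe_verts L) (lobe_adj L)))
       \<and> (arc_transitive V E \<longrightarrow> lobe_transitive V E \<and>
            (\<forall>L\<in>lobes E. arc_transitive (lobe_verts L) (lobe_adj L)))"
proof (intro conjI impI ballI)
  note g = assms(1)
  show "lobe_transitive V E" if "edge_transitive V E" using et_lobe_transitive[OF g that] .
  show "lobe_transitive V E" if "arc_transitive V E" using et_lobe_transitive[OF g at_et[OF g that]] .
  show "edge_transitive (lobe_verts L) (lobe_adj L)" if et: "edge_transitive V E" and L: "L \<in> lobes E" for L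
    unfolding edge_transitive_def lobe_edges[OF g L]
  proof (intro ballI)
    fix e1 e2 assume e: "e1 \<in> L" "e2 \<in> L"
    then obtain f where "graph_aut V E f" "f ` e1 = e2" using et lobe_sub[OF L] unfolding edge_transitive_def by blast
    then show "\<exists>f. graph_aut (lobe_verts L) (lobe_adj L) f \<and> f ` e1 = e2" using lobe_aut[OF g L e] by blast
  qed
  show "arc_transitive (lobe_verts L) (lobe_adj L)" if at: "arc_transitive V E" and L: "L \<in> lobes E" for L
    unfolding arc_transitive_def
  proof (intro ballI)
    fix a b assume ab: "a \<in> graph_arcs (lobe_adj L)" "b \<in> graph_arcs (lobe_adj L)"
    obtain x1 y1 x2 y2 where xy: "a = (x1, y1)" "b = (x2, y2)" "{x1, y1} \<in> L" "{x2, y2} \<in> L"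
      using ab unfolding graph_arcs_def lobe_adj_def by auto
    have "E x1 y1" "E x2 y2" using xy lobe_sub[OF L] edge_E[OF g] by auto
    then obtain f where f: "graph_aut V E f" "f x1 = x2" "f y1 = y2"
      using at unfolding arc_transitive_def graph_arcs_def by fastforce
    then have "f ` {x1, y1} = {x2, y2}" by auto
    then have "graph_aut (lobe_verts L) (lobe_adj L) f" using lobe_aut[OF g L xy(3,4) f(1)] by blast
    then show "\<exists>f. graph_aut (lobe_verts L) (lobe_adj L) f \<and> f (fst a) = fst b \<and> f (snd a) = snd b"
      using f xy by auto
  qed
qed

end
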